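(* Let ${\mathbb K}$ be a field, $n\geqslant 2$, $N$ and $r$ positive integers. Let $L$ be a set of lines of $\mathrm{AG}_n({\mathbb K})$, let $D\subseteq\mathrm{PG}_{n-1}({\mathbb K})$ be the set of directions of the lines of $L$, and let $S$ be a set of points of $\mathrm{AG}_n({\mathbb K})$ such that every line of $L$ is incident with at least $N$ points of $S$. If $U$ is a subspace of ${\mathbb K}[X_1,\ldots,X_n]$ of polynomials of degree at most $rN-1$ with the property that $f^*\notin I_r(D)$ for all non-zero $f\in U$, then $$\binom{2r+n-2}{n}|S|\geqslant\dim U.$$
   Context: The direction of an affine line $\{u+\lambda v\}$ is the point $\langle v\rangle$ of $\mathrm{PG}_{n-1}({\mathbb K})$. For $j,c\in({\mathbb Z}_{\geqslant0})^n$ the $j$-Hasse derivative of $X^c=\prod_i X_i^{c_i}$ is $\partial^j(X^c)=\prod_{i=1}^n\binom{c_i}{j_i}X_i^{c_i-j_i}$ (with $\binom{a}{b}=0$ if $b>a$), extended linearly to polynomials; $\mathrm{wt}(j)=\sum_i j_i$. A polynomial $f$ has a zero of multiplicity $m$ at a point $u\in{\mathbb K}^n$ if $(\partial^j f)(u)=0$ for all $j$ with $\mathrm{wt}(j)\leqslant m-1$. $I_r(D)$ denotes the ideal of homogeneous polynomials of ${\mathbb K}[X_1,\ldots,X_n]$ which have zeros of multiplicity at least $r$ at all points of $D$ (i.e. at vectors $v$ with $\langle v\rangle\in D$). For $f\in{\mathbb K}[X_1,\ldots,X_n]$, $f^*$ denotes the sum of the terms of $f$ of highest total degree; degree means total degree.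 *)

theory Defs
  imports Complex_Main "HOL-Library.Function_Algebras"
begin

text \<open>Points of AG_n(K) and exponent vectors are functions on nat, supported on {0..<n}.
  A polynomial in K[X_1..X_n] is its coefficient function on exponent vectors,
  with finite support contained in the exponent vectors of n variables.\<close>

definition vecs :: "nat \<Rightarrow> (nat \<Rightarrow> 'a::zero) set" where
  "vecs n = {u. \<forall>i\<ge>n. u i = 0}"

type_synonym 'a mpoly = "(nat \<Rightarrow> nat) \<Rightarrow> 'a"

definition psupp :: "'a::zero mpoly \<Rightarrow> (nat \<Rightarrow> nat) set" where
  "psupp f = {c. f c \<noteq> 0}"

definition polys :: "nat \<Rightarrow> 'a::zero mpoly set" where
  "polys n = {f. finite (psupp f) \<and> psupp f \<subseteq> vecs n}"

definition wt :: "nat \<Rightarrow> (nat \<Rightarrow> nat) \<Rightarrow> nat" where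
  "wt n c = (\<Sum>i<n. c i)"

text \<open>total degree (of a nonzero polynomial)\<close>
definition tdeg :: "nat \<Rightarrow> 'a::zero mpoly \<Rightarrow> nat" where
  "tdeg n f = Max (wt n ` psupp f)"

definition top_part :: "nat \<Rightarrow> 'a::zero mpoly \<Rightarrow> 'a mpoly" where
  "top_part n f = (\<lambda>c. if wt n c = tdeg n f then f c else 0)"

definition homogeneous :: "nat \<Rightarrow> 'a::zero mpoly \<Rightarrow> bool" where
  "homogeneous n f \<longleftrightarrow> (\<exists>d. \<forall>c\<in>psupp f. wt n c = d)"

text \<open>value at u of the j-Hasse derivative of f\<close>
definition hasse_eval :: "nat \<Rightarrow> (nat \<Rightarrow> nat) \<Rightarrow> 'a::comm_ring_1 mpoly \<Rightarrow> (nat \<Rightarrow> 'a) \<Rightarrow> 'a" where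
  "hasse_eval n j f u =
     (\<Sum>c\<in>psupp f. f c * (\<Prod>i<n. of_nat (c i choose j i) * u i ^ (c i - j i)))"

definition zero_mult :: "nat \<Rightarrow> nat \<Rightarrow> 'a::comm_ring_1 mpoly \<Rightarrow> (nat \<Rightarrow> 'a) \<Rightarrow> bool" where
  "zero_mult n m f u \<longleftrightarrow> (\<forall>j\<in>vecs n. wt n j < m \<longrightarrow> hasse_eval n j f u = 0)"

definition aline :: "(nat \<Rightarrow> 'a::comm_ring_1) \<Rightarrow> (nat \<Rightarrow> 'a) \<Rightarrow> (nat \<Rightarrow> 'a) set" where
  "aline u v = {(\<lambda>i. u i + t * v i) | t. True}"

definition is_line :: "nat \<Rightarrow> (nat \<Rightarrow> 'a::comm_ring_1) set \<Rightarrow> bool" where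
  "is_line n l \<longleftrightarrow> (\<exists>u\<in>vecs n. \<exists>v\<in>vecs n. v \<noteq> (\<lambda>_. 0) \<and> l = aline u v)"

text \<open>The set of vectors v with <v> in D, where D is the set of directions of lines in L.\<close>
definition dir_vecs :: "nat \<Rightarrow> (nat \<Rightarrow> 'a::comm_ring_1) set set \<Rightarrow> (nat \<Rightarrow> 'a) set" where
  "dir_vecs n L = {v\<in>vecs n. v \<noteq> (\<lambda>_. 0) \<and> (\<exists>l\<in>L. \<exists>u\<in>vecs n. l = aline u v)}"

definition I_r :: "nat \<Rightarrow> nat \<Rightarrow> (nat \<Rightarrow> 'a::comm_ring_1) set \<Rightarrow> 'a mpoly set" where
  "I_r n r DV = {f\<in>polys n. homogeneous n f \<and> (\<forall>v\<in>DV. zero_mult n r f v)}"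

definition pscale :: "'a::times \<Rightarrow> 'a mpoly \<Rightarrow> 'a mpoly" where
  "pscale a f = (\<lambda>c. a * f c)"

lemma vector_space_pscale: "vector_space (pscale :: 'a::field \<Rightarrow> 'a mpoly \<Rightarrow> 'a mpoly)"
  by unfold_locales (simp_all add: pscale_def fun_eq_iff algebra_simps)

end

theory Submission
  imports Defs "HOL-Computational_Algebra.Polynomial"
begin


definition box :: "nat \<Rightarrow> nat \<Rightarrow> (nat \<Rightarrow> nat) set" where
  "box n k = {c \<in> vecs n. wt n c \<le> k}"

lemma wt_upd: "wt n (c(n:=a)) = wt n c"
  unfolding wt_def by (intro sum.cong) auto

lemma wt_Suc: "wt (Suc n) c = wt n c + c n"
  unfolding wt_def by simp

lemma box_0: "box 0 k = {\<lambda>_. 0}"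
  unfolding box_def vecs_def wt_def by auto

lemma box_Suc: "box (Suc n) k = (\<Union>a\<le>k. (\<lambda>c. c(n:=a)) ` box n (k - a))"
proof (rule set_eqI, rule iffI)
  fix c assume c: "c \<in> box (Suc n) k"
  let ?c' = "c(n:=0)"
  have "?c' \<in> box n (k - c n)" "c = ?c'(n := c n)" "c n \<le> k"
    using c unfolding box_def vecs_def by (auto simp: wt_upd wt_Suc)
  then show "c \<in> (\<Union>a\<le>k. (\<lambda>c. c(n:=a)) ` box n (k - a))" by blast
next
  fix c assume "c \<in> (\<Union>a\<le>k. (\<lambda>c. c(n:=a)) ` box n (k - a))"
  then obtain a c' where "a \<le> k" "c' \<in> box n (k - a)" "c = c'(n:=a)" by auto
  then show "c \<in> box (Suc n) k"
    unfolding box_def vecs_def by (auto simp: wt_upd wt_Suc)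
qed

lemma finite_box: "finite (box n k)"
proof (induction n arbitrary: k)
  case 0 then show ?case by (simp add: box_0)
next
  case (Suc n) then show ?case by (simp add: box_Suc)
qed

lemma card_box_le: "card (box n k) \<le> (k + n) choose n"
proof (induction n arbitrary: k)
  case 0 then show ?case by (simp add: box_0)
next
  case (Suc n)
  have "card (box (Suc n) k) \<le> (\<Sum>a\<le>k. card ((\<lambda>c. c(n:=a)) ` box n (k - a)))"
    unfolding box_Suc by (rule card_UN_le) simp
  also have "\<dots> \<le> (\<Sum>a\<le>k. (k - a + n) choose n)"
    by (intro sum_mono order.trans[OF card_image_le[OF finite_box] Suc.IH])
  also have "\<dots> = (\<Sum>a<Suc k. (Suc k - Suc a + n) choose n)"
    by (simp add: lessThan_Suc_atMost)
  also have "\<dots> = (\<Sum>b<Suc k. (b + n) choose n)"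
    by (rule sum.nat_diff_reindex)
  also have "\<dots> = (\<Sum>b\<le>k. (n + b) choose b)"
    by (intro sum.cong) (auto simp: lessThan_Suc_atMost binomial_symmetric[of n "b+n" for b] add.commute)
  also have "\<dots> = Suc (n + k) choose k" by (rule sum_choose_lower)
  also have "\<dots> = (k + Suc n) choose Suc n"
    by (subst binomial_symmetric) (simp_all add: ac_simps)
  finally show ?case .
qed



definition pbox :: "nat \<Rightarrow> nat \<Rightarrow> (nat \<Rightarrow> nat) set" where
  "pbox n D = {a \<in> vecs n. \<forall>i<n. a i \<le> D}"

lemma pbox_Suc: "pbox (Suc n) D = (\<lambda>(c,a). c(n:=a)) ` (pbox n D \<times> {..D})"
proof (rule set_eqI, rule iffI)
  fix c assume c: "c \<in> pbox (Suc n) D"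
  have "(c(n:=0), c n) \<in> pbox n D \<times> {..D}" "c = (c(n:=0))(n := c n)"
    using c unfolding pbox_def vecs_def by auto
  then show "c \<in> (\<lambda>(c,a). c(n:=a)) ` (pbox n D \<times> {..D})"
    by (metis (no_types, lifting) case_prod_conv image_eqI)
next
  fix c assume "c \<in> (\<lambda>(c,a). c(n:=a)) ` (pbox n D \<times> {..D})"
  then show "c \<in> pbox (Suc n) D" unfolding pbox_def vecs_def by auto
qed

lemma inj_pbox: "inj_on (\<lambda>(c,a). c(n:=a)) (pbox n D \<times> A)"
proof (rule inj_onI, clarsimp)
  fix c a c' a' assume "c \<in> pbox n D" "c' \<in> pbox n D" and eq: "c(n := a) = c'(n := a')"
  then have "a = a'" by (metis fun_upd_same)
  moreover have "c = c'"
  proof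
    fix i show "c i = c' i"
    proof (cases "i = n")
      case True with \<open>c \<in> pbox n D\<close> \<open>c' \<in> pbox n D\<close> show ?thesis by (simp add: pbox_def vecs_def)
    next
      case False then show ?thesis using fun_cong[OF eq, of i] by simp
    qed
  qed
  ultimately show "c = c' \<and> a = a'" by simp
qed

lemma finite_pbox: "finite (pbox n D)"
proof (induction n)
  case 0
  have "pbox 0 D = {\<lambda>_. 0}" by (auto simp: pbox_def vecs_def)
  then show ?case by simp
qed (simp add: pbox_Suc)

lemma prod_sum_pbox:
  fixes g :: "nat \<Rightarrow> nat \<Rightarrow> 'b::comm_semiring_1"
  shows "(\<Prod>i<n. \<Sum>a\<le>D. g i a) = (\<Sum>a\<in>pbox n D. \<Prod>i<n. g i (a i))"
proof (induction n)
  case 0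
  have "pbox 0 D = {\<lambda>_. 0}" by (auto simp: pbox_def vecs_def)
  then show ?case by simp
next
  case (Suc n)
  have "(\<Prod>i<Suc n. \<Sum>a\<le>D. g i a) = (\<Sum>c\<in>pbox n D. \<Prod>i<n. g i (c i)) * (\<Sum>a\<le>D. g n a)"
    using Suc by simp
  also have "\<dots> = (\<Sum>(c,a)\<in>pbox n D \<times> {..D}. (\<Prod>i<n. g i (c i)) * g n a)"
    by (simp add: sum_product sum.cartesian_product)
  also have "\<dots> = (\<Sum>(c,a)\<in>pbox n D \<times> {..D}. \<Prod>i<Suc n. g i ((c(n:=a)) i))"
    by (intro sum.cong refl) (auto intro!: prod.cong)
  also have "\<dots> = (\<Sum>x\<in>pbox (Suc n) D. \<Prod>i<Suc n. g i (x i))"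
    unfolding pbox_Suc by (subst sum.reindex[OF inj_pbox]) (simp add: case_prod_beta)
  finally show ?case .
qed

lemma prod_monom: "(\<Prod>i\<in>I. monom (x i) (k i)) = monom (\<Prod>i\<in>I. x i) (\<Sum>i\<in>I. k i)"
  by (induction I rule: infinite_finite_induct) (auto simp: mult_monom)

lemma linear_power_expand:
  fixes p v :: "'b::comm_semiring_1"
  assumes "e \<le> D"
  shows "[:p, v:] ^ e = (\<Sum>a\<le>D. monom (of_nat (e choose a) * p ^ (e - a) * v ^ a) a)"
proof -
  have "[:p, v:] = monom v 1 + [:p:]" by (simp add: monom_altdef)
  then have "[:p, v:] ^ e = (\<Sum>a\<le>e. of_nat (e choose a) * monom v 1 ^ a * [:p:] ^ (e - a))"
    by (simp add: binomial_ring)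
  also have "\<dots> = (\<Sum>a\<le>e. monom (of_nat (e choose a) * p ^ (e - a) * v ^ a) a)"
  proof (rule sum.cong[OF refl])
    fix a
    have "of_nat (e choose a) * monom v 1 ^ a * [:p:] ^ (e - a) = [:of_nat (e choose a):] * monom (v^a) a * [:p ^ (e - a):]"
      by (simp add: of_nat_poly monom_power poly_const_pow)
    also have "\<dots> = monom (of_nat (e choose a) * p ^ (e - a) * v ^ a) a"
      by (simp add: smult_monom mult_ac)
    finally show "of_nat (e choose a) * monom v 1 ^ a * [:p:] ^ (e - a) = monom (of_nat (e choose a) * p ^ (e - a) * v ^ a) a" .
  qed
  also have "\<dots> = (\<Sum>a\<le>D. monom (of_nat (e choose a) * p ^ (e - a) * v ^ a) a)"
    using assms by (intro sum.mono_neutral_left) (auto, metis binomial_eq_0 not_le of_nat_0 mult_zero_left)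
  finally show ?thesis .
qed
lemma coeff_mult_top:
  fixes p q :: "'b::comm_semiring_1 poly"
  assumes "degree p \<le> a" "degree q \<le> b"
  shows "coeff (p * q) (a + b) = coeff p a * coeff q b"
proof -
  have "coeff (p * q) (a + b) = (\<Sum>i\<le>a+b. coeff p i * coeff q (a + b - i))"
    by (simp add: coeff_mult)
  also have "\<dots> = (\<Sum>i\<in>{a}. coeff p i * coeff q (a + b - i))"
  proof (rule sum.mono_neutral_right)
    show "\<forall>i\<in>{..a + b} - {a}. coeff p i * coeff q (a + b - i) = 0"
    proof
      fix i assume "i \<in> {..a + b} - {a}"
      then consider "i > a" | "i < a" by force
      then show "coeff p i * coeff q (a + b - i) = 0"
      proof cases
        case 1 then show ?thesis using assms(1) by (simp add: coeff_eq_0)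
      next
        case 2 then have "a + b - i > b" by linarith
        then show ?thesis using assms(2) by (simp add: coeff_eq_0)
      qed
    qed
  qed auto
  finally show ?thesis by simp
qed

lemma prod_top:
  fixes P :: "'i \<Rightarrow> 'b::comm_semiring_1 poly"
  assumes "finite I" "\<And>i. i \<in> I \<Longrightarrow> degree (P i) \<le> k i"
  shows "degree (\<Prod>i\<in>I. P i) \<le> (\<Sum>i\<in>I. k i) \<and> coeff (\<Prod>i\<in>I. P i) (\<Sum>i\<in>I. k i) = (\<Prod>i\<in>I. coeff (P i) (k i))"
  using assms
proof (induction I rule: finite_induct)
  case empty then show ?case by simp
next
  case (insert x F)
  then have d: "degree (P x) \<le> k x" and IH: "degree (prod P F) \<le> sum k F"
      "coeff (prod P F) (sum k F) = (\<Prod>i\<in>F. coeff (P i) (k i))" by auto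
  have "degree (P x * prod P F) \<le> k x + sum k F"
    using d IH(1) degree_mult_le[of "P x" "prod P F"] by linarith
  moreover have "coeff (P x * prod P F) (k x + sum k F) = coeff (P x) (k x) * (\<Prod>i\<in>F. coeff (P i) (k i))"
    using coeff_mult_top[OF d IH(1)] IH(2) by simp
  ultimately show ?case using insert by simp
qed

lemma linear_power_top:
  fixes u v :: "'b::comm_semiring_1"
  shows "degree ([:u, v:] ^ e) \<le> e \<and> coeff ([:u, v:] ^ e) e = v ^ e"
proof
  have "degree [:u, v:] \<le> 1" by (simp add: degree_pCons_le)
  then show "degree ([:u, v:] ^ e) \<le> e"
    using degree_power_le[of "[:u,v:]" e] mult_le_mono1[of "degree [:u, v:]" 1 e] by linarith
  show "coeff ([:u, v:] ^ e) e = v ^ e"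
    by (subst coeff_linear_poly_power) auto
qed
lemma pcompose_power: "pcompose (p ^ k) r = (pcompose p r) ^ k"
  by (induction k) (simp_all add: pcompose_1 pcompose_mult)

lemma pcompose_linear: "pcompose [:x, y:] [:b, 1:] = [:x + b * y, y:]" for x y b :: "'b::comm_ring_1"
  by (simp add: pcompose_pCons algebra_simps)



definition Hp :: "nat \<Rightarrow> 'a::comm_ring_1 mpoly \<Rightarrow> (nat \<Rightarrow> nat) \<Rightarrow> (nat \<Rightarrow> 'a) \<Rightarrow> (nat \<Rightarrow> 'a) \<Rightarrow> 'a poly" where
  "Hp n f j q v = (\<Sum>c\<in>psupp f. smult (f c) (\<Prod>i<n. smult (of_nat (c i choose j i)) ([:q i, v i:] ^ (c i - j i))))"

lemma smult_sum_right: "smult a (\<Sum>x\<in>A. p x) = (\<Sum>x\<in>A. smult a (p x))"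
  by (induction A rule: infinite_finite_induct) (auto simp: smult_add_right)

lemma Hp_shift: "pcompose (Hp n f j q v) [:b, 1:] = Hp n f j (\<lambda>i. q i + b * v i) v"
  unfolding Hp_def by (simp add: pcompose_sum pcompose_smult pcompose_prod pcompose_power pcompose_linear)

lemma choose_identity: "(c choose j) * ((c - j) choose a) = ((a + j) choose j) * (c choose (a + j))"
proof (cases "a + j \<le> c")
  case True
  have "(c choose (a + j)) * ((a + j) choose j) = (c choose j) * ((c - j) choose (a + j - j))"
    by (rule choose_mult) (use True in auto)
  then show ?thesis by (simp add: mult_ac)
next
  case False
  then consider "c < j" | "j \<le> c" "c - j < a" by linarith
  then show ?thesis by cases (use False in \<open>auto simp: binomial_eq_0\<close>)
qed

lemma Hp_expand:
  fixes f :: "'a::comm_ring_1 mpoly"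
  assumes fin: "finite (psupp f)" and D: "\<forall>c\<in>psupp f. \<forall>i<n. c i \<le> D"
  shows "Hp n f j p v = (\<Sum>a\<in>pbox n D. monom ((\<Prod>i<n. of_nat ((a i + j i) choose j i) * v i ^ a i)
            * hasse_eval n (\<lambda>i. a i + j i) f p) (wt n a))"
proof -
  define X where "X c a i = (of_nat (c i choose j i) * (of_nat ((c i - j i) choose a) * p i ^ (c i - j i - a) * v i ^ a) :: 'a)" for c a i
  have step1: "(\<Prod>i<n. smult (of_nat (c i choose j i)) ([:p i, v i:] ^ (c i - j i)))
      = monom 0 0 + (\<Sum>a\<in>pbox n D. monom (\<Prod>i<n. X c (a i) i) (wt n a))" if c: "c \<in> psupp f" for c
  proof -
    have "(\<Prod>i<n. smult (of_nat (c i choose j i)) ([:p i, v i:] ^ (c i - j i)))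
        = (\<Prod>i<n. \<Sum>a\<le>D. monom (X c a i) a)"
    proof (rule prod.cong[OF refl])
      fix i assume "i \<in> {..<n}"
      then have "c i - j i \<le> D" using D c by (meson diff_le_self le_trans lessThan_iff)
      then show "smult (of_nat (c i choose j i)) ([:p i, v i:] ^ (c i - j i)) = (\<Sum>a\<le>D. monom (X c a i) a)"
        by (simp add: linear_power_expand smult_sum_right smult_monom X_def)
    qed
    also have "\<dots> = (\<Sum>a\<in>pbox n D. \<Prod>i<n. monom (X c (a i) i) (a i))"
      by (rule prod_sum_pbox)
    also have "\<dots> = (\<Sum>a\<in>pbox n D. monom (\<Prod>i<n. X c (a i) i) (wt n a))"
      by (simp add: prod_monom wt_def)
    finally show ?thesis by simp
  qed
  have "Hp n f j p v = (\<Sum>c\<in>psupp f. smult (f c) (\<Sum>a\<in>pbox n D. monom (\<Prod>i<n. X c (a i) i) (wt n a)))"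
    unfolding Hp_def by (intro sum.cong refl) (simp add: step1)
  also have "\<dots> = (\<Sum>a\<in>pbox n D. \<Sum>c\<in>psupp f. monom (f c * (\<Prod>i<n. X c (a i) i)) (wt n a))"
    by (simp add: smult_sum_right smult_monom sum.swap[of _ "psupp f"])
  also have "\<dots> = (\<Sum>a\<in>pbox n D. monom (\<Sum>c\<in>psupp f. f c * (\<Prod>i<n. X c (a i) i)) (wt n a))"
    by (simp add: monom_sum)
  also have "\<dots> = (\<Sum>a\<in>pbox n D. monom ((\<Prod>i<n. of_nat ((a i + j i) choose j i) * v i ^ a i)
            * hasse_eval n (\<lambda>i. a i + j i) f p) (wt n a))"
  proof (rule sum.cong[OF refl], rule arg_cong[where f="\<lambda>x. monom x _"])
    fix a
    have "X c (a i) i = (of_nat ((a i + j i) choose j i) * v i ^ a i) *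
           (of_nat (c i choose (a i + j i)) * p i ^ (c i - (a i + j i)))" for c i
    proof -
      have eq: "(of_nat (c i choose j i) * of_nat ((c i - j i) choose a i) :: 'a)
          = of_nat ((a i + j i) choose j i) * of_nat (c i choose (a i + j i))"
        by (simp only: of_nat_mult[symmetric] choose_identity)
      have "X c (a i) i = (of_nat (c i choose j i) * of_nat ((c i - j i) choose a i)) * (p i ^ (c i - (a i + j i)) * v i ^ a i)"
        unfolding X_def by (simp add: mult_ac diff_diff_left add.commute)
      also have "\<dots> = (of_nat ((a i + j i) choose j i) * of_nat (c i choose (a i + j i))) * (p i ^ (c i - (a i + j i)) * v i ^ a i)"
        by (simp only: eq)
      finally show ?thesis by (simp add: mult_ac)
    qed
    then show "(\<Sum>c\<in>psupp f. f c * (\<Prod>i<n. X c (a i) i)) =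
        (\<Prod>i<n. of_nat ((a i + j i) choose j i) * v i ^ a i) * hasse_eval n (\<lambda>i. a i + j i) f p"
      by (simp add: hasse_eval_def prod.distrib sum_distrib_left mult_ac)
  qed
  finally show ?thesis .
qed



lemma Qtop:
  fixes u v :: "nat \<Rightarrow> 'a::comm_ring_1"
  assumes "wt n c \<le> d" "wt n j \<le> d"
  shows "degree (\<Prod>i<n. smult (of_nat (c i choose j i)) ([:u i, v i:] ^ (c i - j i))) \<le> d - wt n j \<and>
    coeff (\<Prod>i<n. smult (of_nat (c i choose j i)) ([:u i, v i:] ^ (c i - j i))) (d - wt n j) =
    (if wt n c = d then (\<Prod>i<n. of_nat (c i choose j i) * v i ^ (c i - j i)) else 0)"
proof (cases "\<exists>i<n. c i < j i")
  case True
  then obtain i where i: "i < n" "c i < j i" by blast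
  have "(\<Prod>i<n. smult (of_nat (c i choose j i)) ([:u i, v i:] ^ (c i - j i))) = 0"
    by (rule prod_zero) (use i in \<open>auto simp: binomial_eq_0 intro!: bexI[of _ i]\<close>)
  moreover have "(\<Prod>i<n. of_nat (c i choose j i) * v i ^ (c i - j i) :: 'a) = 0"
    by (rule prod_zero) (use i in \<open>auto simp: binomial_eq_0 intro!: bexI[of _ i]\<close>)
  ultimately show ?thesis by simp
next
  case False
  then have jc: "\<forall>i<n. j i \<le> c i" by auto
  have "degree (\<Prod>i<n. smult (of_nat (c i choose j i)) ([:u i, v i:] ^ (c i - j i))) \<le> (\<Sum>i<n. c i - j i) \<and>
    coeff (\<Prod>i<n. smult (of_nat (c i choose j i)) ([:u i, v i:] ^ (c i - j i))) (\<Sum>i<n. c i - j i) =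
    (\<Prod>i<n. coeff (smult (of_nat (c i choose j i)) ([:u i, v i:] ^ (c i - j i))) (c i - j i))"
    by (rule prod_top) (auto intro: order_trans[OF degree_smult_le] simp: linear_power_top)
  moreover have "(\<Sum>i<n. c i - j i) = wt n c - wt n j"
    unfolding wt_def by (rule sum_subtractf_nat) (use jc in auto)
  moreover have "wt n j \<le> wt n c"
    unfolding wt_def by (rule sum_mono) (use jc in auto)
  moreover have "coeff (smult (of_nat (c i choose j i)) ([:u i, v i:] ^ (c i - j i))) (c i - j i)
      = of_nat (c i choose j i) * v i ^ (c i - j i)" for i
    by (simp add: linear_power_top)
  ultimately show ?thesis using assms
    by (cases "wt n c = d") (auto intro!: coeff_eq_0)
qed

lemma Hp_top:
  fixes f :: "'a::comm_ring_1 mpoly"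
  assumes fin: "finite (psupp f)" and dle: "\<forall>c\<in>psupp f. wt n c \<le> d" and w: "wt n j \<le> d"
  shows "degree (Hp n f j u v) \<le> d - wt n j \<and> coeff (Hp n f j u v) (d - wt n j) =
    (\<Sum>c\<in>psupp f. if wt n c = d then f c * (\<Prod>i<n. of_nat (c i choose j i) * v i ^ (c i - j i)) else 0)"
proof
  show "degree (Hp n f j u v) \<le> d - wt n j"
    unfolding Hp_def using Qtop[of n _ d j u v] dle w
    by (intro degree_sum_le fin order_trans[OF degree_smult_le]) auto
  show "coeff (Hp n f j u v) (d - wt n j) =
    (\<Sum>c\<in>psupp f. if wt n c = d then f c * (\<Prod>i<n. of_nat (c i choose j i) * v i ^ (c i - j i)) else 0)"
    unfolding Hp_def coeff_sum coeff_smult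
    by (intro sum.cong refl) (use Qtop[of n _ d j u v] dle w in auto)
qed

lemma roots_bound:
  fixes p :: "'a::field poly"
  assumes "finite T" "\<And>t. t \<in> T \<Longrightarrow> [:-t, 1:] ^ m dvd p" "degree p < m * card T"
  shows "p = 0"
proof (rule ccontr)
  assume p0: "p \<noteq> 0"
  have "(\<Prod>t\<in>T. [:-t, 1:] ^ m) dvd p"
    using assms(1,2)
  proof (induction T rule: finite_induct)
    case empty then show ?case by simp
  next
    case (insert a T)
    then obtain q where q: "p = (\<Prod>t\<in>T. [:-t, 1:] ^ m) * q" by (auto elim!: dvdE)
    have nz: "(\<Prod>t\<in>T. [:-t, 1:] ^ m) \<noteq> 0" by (simp add: prod_zero_iff insert)
    have q0: "q \<noteq> 0" using p0 q by auto
    have "m \<le> order a p" using insert(4)[of a] p0 by (simp add: order_divides)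
    also have "order a p = order a (\<Prod>t\<in>T. [:-t, 1:] ^ m) + order a q"
      using q p0 by (simp add: order_mult)
    also have "order a (\<Prod>t\<in>T. [:-t, 1:] ^ m) = 0"
      by (rule order_0I) (use insert(2) in \<open>auto simp: poly_prod prod_zero_iff insert(1)\<close>)
    finally have "[:-a, 1:] ^ m dvd q" by (simp add: order_divides)
    then show ?case using q insert(1,2) by (auto simp: mult.commute mult_dvd_mono)
  qed
  then have "degree (\<Prod>t\<in>T. [:-t, 1:] ^ m) \<le> degree p"
    using p0 by (rule dvd_imp_degree_le)
  moreover have "degree (\<Prod>t\<in>T. [:-t, 1:] ^ m) = m * card T"
    by (subst degree_prod_eq_sum_degree) (auto simp: degree_power_eq)
  ultimately show False using assms(3) by linarith
qed

lemma monom_dvd_Hp: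
  fixes f :: "'a::comm_ring_1 mpoly"
  assumes fin: "finite (psupp f)" and D: "\<forall>c\<in>psupp f. \<forall>i<n. c i \<le> D"
    and z: "\<And>a. a \<in> pbox n D \<Longrightarrow> wt n a < m \<Longrightarrow> hasse_eval n (\<lambda>i. a i + j i) f p = 0"
  shows "monom 1 m dvd Hp n f j p v"
  unfolding Hp_expand[OF fin D]
proof (rule dvd_sum)
  fix a assume a: "a \<in> pbox n D"
  show "monom 1 m dvd monom ((\<Prod>i<n. of_nat ((a i + j i) choose j i) * v i ^ a i) * hasse_eval n (\<lambda>i. a i + j i) f p) (wt n a)"
  proof (cases "wt n a < m")
    case True then show ?thesis using z[OF a] by simp
  next
    case False
    then have "monom ((\<Prod>i<n. of_nat ((a i + j i) choose j i) * v i ^ a i) * hasse_eval n (\<lambda>i. a i + j i) f p) (wt n a)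
      = monom 1 m * monom ((\<Prod>i<n. of_nat ((a i + j i) choose j i) * v i ^ a i) * hasse_eval n (\<lambda>i. a i + j i) f p) (wt n a - m)"
      by (simp add: mult_monom)
    then show ?thesis by simp
  qed
qed



lemma pcompose_monom_1: "pcompose (monom 1 m) [:b, 1:] = [:b, 1:] ^ (m::nat)"
  for b :: "'a::comm_ring_1"
proof -
  have "monom (1::'a) m = [:0, 1:] ^ m" by (simp add: monom_altdef)
  then show ?thesis by (simp add: pcompose_power pcompose_pCons)
qed

lemma wt_add: "wt n (\<lambda>i. a i + j i) = wt n a + wt n j"
  unfolding wt_def by (simp add: sum.distrib)

lemma key:
  fixes f :: "'a::field mpoly" and S :: "(nat \<Rightarrow> 'a) set"
  assumes fpol: "f \<in> polys n" and f0: "f \<noteq> (\<lambda>_. 0)"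
    and deg: "\<forall>c\<in>psupp f. wt n c \<le> r * N - 1"
    and N: "N > 0" and r: "r > 0"
    and S: "finite S" and lines: "\<forall>l\<in>L. N \<le> card (l \<inter> S)"
    and hz: "\<forall>s\<in>S. \<forall>j\<in>vecs n. wt n j \<le> 2 * r - 2 \<longrightarrow> hasse_eval n j f s = 0"
  shows "top_part n f \<in> I_r n r (dir_vecs n L)"
proof -
  have fin: "finite (psupp f)" and sub: "psupp f \<subseteq> vecs n" using fpol by (auto simp: polys_def)
  have ne: "psupp f \<noteq> {}" using f0 by (auto simp: psupp_def)
  define d where "d = tdeg n f"
  have dle: "\<forall>c\<in>psupp f. wt n c \<le> d" unfolding d_def tdeg_def using fin by auto
  have dN: "d \<le> r * N - 1" unfolding d_def tdeg_def using fin ne deg by auto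
  have ptop: "psupp (top_part n f) = {c \<in> psupp f. wt n c = d}"
    by (auto simp: psupp_def top_part_def d_def)
  have tpol: "top_part n f \<in> polys n" using fin sub by (auto simp: polys_def ptop)
  have hom: "homogeneous n (top_part n f)" unfolding homogeneous_def ptop by auto
  have E: "hasse_eval n j (top_part n f) v =
     (\<Sum>c\<in>psupp f. if wt n c = d then f c * (\<Prod>i<n. of_nat (c i choose j i) * v i ^ (c i - j i)) else 0)" for j v
    unfolding hasse_eval_def ptop using fin by (simp add: sum.inter_filter top_part_def d_def)
  have zm: "zero_mult n r (top_part n f) v" if v: "v \<in> dir_vecs n L" for v
    unfolding zero_mult_def
  proof (intro ballI impI)
    fix j assume j: "j \<in> vecs n" and wj: "wt n j < r"
    show "hasse_eval n j (top_part n f) v = 0"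
    proof (cases "wt n j \<le> d")
      case False
      have "(if wt n c = d then f c * (\<Prod>i<n. of_nat (c i choose j i) * v i ^ (c i - j i)) else 0) = 0" for c
      proof (cases "wt n c = d")
        case True
        have "\<exists>i<n. c i < j i"
        proof (rule ccontr)
          assume "\<not> (\<exists>i<n. c i < j i)"
          then have "wt n j \<le> wt n c" unfolding wt_def by (intro sum_mono) auto
          then show False using True False by simp
        qed
        then obtain i where "i < n" "c i < j i" by blast
        then have "(\<Prod>i<n. of_nat (c i choose j i) * v i ^ (c i - j i) :: 'a) = 0"
          by (intro prod_zero) (auto simp: binomial_eq_0 intro!: bexI[of _ i])
        then show ?thesis by simp
      qed simp
      then show ?thesis by (simp add: E)
    next
      case True
      define w where "w = wt n j"
      from v obtain l u where vv: "v \<in> vecs n" "v \<noteq> (\<lambda>_. 0)" and l: "l \<in> L" "u \<in> vecs n" "l = aline u v"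
        unfolding dir_vecs_def by auto
      define pt where "pt t = (\<lambda>i. u i + t * v i)" for t
      define T where "T = {t. pt t \<in> S}"
      define m where "m = 2 * r - 1 - w"
      define G where "G = Hp n f j u v"
      have Gtop: "degree G \<le> d - w" "coeff G (d - w) = hasse_eval n j (top_part n f) v"
        using Hp_top[OF fin dle True, of u v] by (simp_all add: G_def E w_def)
      have inj: "inj pt"
      proof (rule injI)
        fix t1 t2 assume eq: "pt t1 = pt t2"
        from vv obtain i where "v i \<noteq> 0" by auto
        moreover have "u i + t1 * v i = u i + t2 * v i" using fun_cong[OF eq, of i] by (simp add: pt_def)
        ultimately show "t1 = t2" by simp
      qed
      have lS: "l \<inter> S = pt ` T" unfolding l(3) aline_def T_def pt_def by auto
      have finT: "finite T"
        using S lS inj by (metis finite_Int finite_imageD inj_on_subset subset_UNIV)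
      have cardT: "N \<le> card T"
        using lines l(1) lS card_image[OF inj_on_subset[OF inj subset_UNIV, of T]] by auto
      have dvd: "[:-t, 1:] ^ m dvd G" if t: "t \<in> T" for t
      proof -
        have D: "\<forall>c\<in>psupp f. \<forall>i<n. c i \<le> r * N"
        proof (intro ballI allI impI)
          fix c i assume c: "c \<in> psupp f" and i: "i < n"
          have "c i \<le> wt n c" unfolding wt_def using i by (intro member_le_sum) auto
          then show "c i \<le> r * N" using deg c by fastforce
        qed
        have "monom 1 m dvd Hp n f j (pt t) v"
        proof (rule monom_dvd_Hp[OF fin D])
          fix a assume a: "a \<in> pbox n (r * N)" "wt n a < m"
          have "(\<lambda>i. a i + j i) \<in> vecs n" using a j by (auto simp: pbox_def vecs_def)
          moreover have "wt n (\<lambda>i. a i + j i) \<le> 2 * r - 2"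
            using a(2) wj unfolding wt_add m_def w_def by linarith
          moreover have "pt t \<in> S" using t by (simp add: T_def)
          ultimately show "hasse_eval n (\<lambda>i. a i + j i) f (pt t) = 0" using hz by blast
        qed
        then obtain k where k: "Hp n f j (pt t) v = monom 1 m * k" by (elim dvdE)
        have "G = pcompose (Hp n f j (pt t) v) [:-t, 1:]"
          unfolding G_def Hp_shift by (simp add: pt_def)
        also have "\<dots> = [:-t, 1:] ^ m * pcompose k [:-t, 1:]"
          by (simp add: k pcompose_mult pcompose_monom_1)
        finally show ?thesis by simp
      qed
      have "r \<le> m" using wj r by (simp add: m_def w_def)
      then have "r * N \<le> m * card T" using cardT by (meson mult_le_mono)
      moreover have "r * N > 0" using r N by simp
      ultimately have "degree G < m * card T" using Gtop(1) dN by linarith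
      then have "G = 0" using roots_bound[OF finT dvd] by blast
      then show ?thesis using Gtop(2) by simp
    qed
  qed
  show ?thesis unfolding I_r_def using tpol hom zm by blast
qed



definition vscale :: "'a::field \<Rightarrow> ('b \<Rightarrow> 'a) \<Rightarrow> ('b \<Rightarrow> 'a)" where
  "vscale a g = (\<lambda>x. a * g x)"

lemma vector_space_vscale: "vector_space (vscale :: 'a::field \<Rightarrow> ('b \<Rightarrow> 'a) \<Rightarrow> _)"
  by unfold_locales (simp_all add: vscale_def fun_eq_iff algebra_simps)

lemma sum_fun_apply: "(\<Sum>x\<in>A. g x) y = (\<Sum>x\<in>A. g x y)"
  by (induction A rule: infinite_finite_induct) auto

theorem theorem3p1:
  fixes n N r :: nat
    and L :: "(nat \<Rightarrow> 'a::field) set set"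
    and S :: "(nat \<Rightarrow> 'a) set"
    and U :: "'a mpoly set"
  assumes "n \<ge> 2" and "N > 0" and "r > 0"
    and "\<forall>l\<in>L. is_line n l"
    and "S \<subseteq> vecs n"
    and "\<forall>l\<in>L. N \<le> card (l \<inter> S)"
    and "module.subspace pscale U"
    and "U \<subseteq> polys n"
    and "\<forall>f\<in>U. \<forall>c\<in>psupp f. wt n c \<le> r * N - 1"
    and "\<forall>f\<in>U. f \<noteq> (\<lambda>_. 0) \<longrightarrow> top_part n f \<notin> I_r n r (dir_vecs n L)"
  shows "finite S \<longrightarrow> ((2 * r + n - 2) choose n) * card S \<ge> vector_space.dim pscale U"
proof
  assume finS: "finite S"
  note A = assms
  interpret V1: vector_space "pscale :: 'a \<Rightarrow> 'a mpoly \<Rightarrow> 'a mpoly" by (rule vector_space_pscale)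
  interpret V2: vector_space "vscale :: 'a \<Rightarrow> ((nat \<Rightarrow> 'a) \<times> (nat \<Rightarrow> nat) \<Rightarrow> 'a) \<Rightarrow> _" by (rule vector_space_vscale)
  define J where "J = box n (2 * r - 2)"
  define C0 where "C0 = box n (r * N - 1)"
  define F where "F = S \<times> J"
  define M where "M s j c = (\<Prod>i<n. of_nat (c i choose j i) * s i ^ (c i - j i) :: 'a)" for s j c
  define \<phi> where "\<phi> f = (\<lambda>x. if x \<in> F then \<Sum>c\<in>C0. f c * M (fst x) (snd x) c else 0)" for f :: "'a mpoly"
  have finF: "finite F" unfolding F_def J_def using finS finite_box by simp
  have finC0: "finite C0" unfolding C0_def by (rule finite_box)
  have lin: "Vector_Spaces.linear pscale vscale \<phi>"
    unfolding Vector_Spaces.linear_iff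
  proof (intro conjI allI)
    show "vector_space pscale" "vector_space vscale" by (rule vector_space_pscale vector_space_vscale)+
    fix x y :: "'a mpoly"
    show "\<phi> (x + y) = \<phi> x + \<phi> y"
      by (auto simp: \<phi>_def fun_eq_iff algebra_simps sum.distrib)
    fix c :: 'a
    show "\<phi> (pscale c x) = vscale c (\<phi> x)"
      by (auto simp: \<phi>_def fun_eq_iff pscale_def vscale_def sum_distrib_left mult.assoc)
  qed
  interpret lin: Vector_Spaces.linear pscale vscale \<phi> by (rule lin)
  have subU: "V1.subspace U" using A(7) .
  have ker: "f = 0" if f: "f \<in> U" "\<phi> f = 0" for f
  proof (rule ccontr)
    assume f0: "f \<noteq> 0"
    have fpol: "f \<in> polys n" using f A(8) by auto
    have sub: "psupp f \<subseteq> C0" using fpol A(9) f unfolding C0_def box_def polys_def by auto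
    have hz: "\<forall>s\<in>S. \<forall>j\<in>vecs n. wt n j \<le> 2 * r - 2 \<longrightarrow> hasse_eval n j f s = 0"
    proof (intro ballI impI)
      fix s j assume "s \<in> S" "j \<in> vecs n" "wt n j \<le> 2 * r - 2"
      then have "(s, j) \<in> F" by (simp add: F_def J_def box_def)
      then have "(\<Sum>c\<in>C0. f c * M s j c) = 0" using fun_cong[OF f(2), of "(s,j)"] by (simp add: \<phi>_def)
      moreover have "(\<Sum>c\<in>C0. f c * M s j c) = hasse_eval n j f s"
        unfolding hasse_eval_def M_def
        by (rule sum.mono_neutral_right[OF finC0 sub]) (auto simp: psupp_def)
      ultimately show "hasse_eval n j f s = 0" by simp
    qed
    have "top_part n f \<in> I_r n r (dir_vecs n L)"
      by (rule key[OF fpol _ _ A(2) A(3) finS A(6) hz]) (use f0 f A(9) in auto)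
    then show False using A(10) f f0 by (auto simp: func_zero)
  qed
  obtain B where B: "B \<subseteq> U" "V1.independent B" "U \<subseteq> V1.span B" "card B = V1.dim U"
    using V1.basis_exists by blast
  show "V1.dim U \<le> ((2 * r + n - 2) choose n) * card S"
  proof (cases "finite B")
    case False
    then show ?thesis using B(4) by simp
  next
    case True
    have spanB: "V1.span B = U" by (rule V1.span_subspace[OF B(1) B(3) subU])
    have inj: "inj_on \<phi> (V1.span B)"
      unfolding spanB lin.inj_on_iff_eq_0[OF subU] using ker by blast
    have indep: "V2.independent (\<phi> ` B)"
      using lin.dependent_inj_imageD[OF _ inj] B(2) by blast
    have cardB: "card (\<phi> ` B) = card B"
      by (rule card_image[OF inj_on_subset[OF inj V1.span_superset]])
    define \<Delta> where "\<Delta> = (\<lambda>x y. if y = x then (1::'a) else 0) ` F"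
    have span: "\<phi> ` B \<subseteq> V2.span \<Delta>"
    proof
      fix g assume "g \<in> \<phi> ` B"
      then obtain b where g: "g = \<phi> b" by blast
      have "g = (\<Sum>x\<in>F. vscale (g x) (\<lambda>y. if y = x then 1 else 0))"
      proof
        fix y
        have "(\<Sum>x\<in>F. vscale (g x) (\<lambda>y. if y = x then 1 else 0)) y = (\<Sum>x\<in>F. if y = x then g x else 0)"
          by (simp add: sum_fun_apply vscale_def if_distrib cong: if_cong)
        also have "\<dots> = (if y \<in> F then g y else 0)"
          using finF by (simp add: sum.delta)
        also have "\<dots> = g y" by (simp add: g \<phi>_def)
        finally show "g y = (\<Sum>x\<in>F. vscale (g x) (\<lambda>y. if y = x then 1 else 0)) y" by simp
      qed
      also have "\<dots> \<in> V2.span \<Delta>"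
        by (intro V2.span_sum V2.span_scale V2.span_base) (auto simp: \<Delta>_def)
      finally show "g \<in> V2.span \<Delta>" .
    qed
    have "card (\<phi> ` B) \<le> card \<Delta>"
      using V2.independent_span_bound[OF _ indep span] finF by (simp add: \<Delta>_def)
    also have "\<dots> \<le> card F" unfolding \<Delta>_def by (rule card_image_le[OF finF])
    also have "\<dots> = card S * card J" by (simp add: F_def card_cartesian_product)
    also have "\<dots> \<le> card S * ((2 * r - 2 + n) choose n)"
      unfolding J_def by (intro mult_le_mono2 card_box_le)
    also have "2 * r - 2 + n = 2 * r + n - 2" using A(3) by simp
    finally show ?thesis using cardB B(4) by (simp add: mult.commute)
  qed
qed


end
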